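(* Let $f\in\mathbb{R}[x,y]$ be a polynomial of degree $n\ge 3$ with homogeneous decomposition $f=\sum_{i=0}^n f_i$. If $f_n$ is hyperbolic or elliptic, then the Hessian curve $\{(x,y)\in\mathbb{R}^2:\mathrm{Hess}\,f(x,y)=0\}$ is compact. Moreover, the set $b^-\cap\mathbb{R}^2$ is hyperbolic (i.e. $\mathrm{Hess}\,f<0$ at each of its points) if $f_n$ is hyperbolic, and elliptic (i.e. $\mathrm{Hess}\,f>0$ at each of its points) if $f_n$ is elliptic.
   Context: $f_i$ denotes the homogeneous part of degree $i$ of $f$. $\mathrm{Hess}\,g=g_{xx}g_{yy}-g_{xy}^2$. A homogeneous polynomial $g\in\mathbb{R}[x,y]$ is hyperbolic (resp. elliptic) if $\mathrm{Hess}\,g$ has no real linear factors and is $\le 0$ (resp. $\ge 0$) everywhere on $\mathbb{R}^2$. Let $H_f\in\mathbb{R}[x,y,z]$ be the homogenization of $\mathrm{Hess}\,f$, i.e. $H_f(x,y,z)=z^{2n-4}\,\mathrm{Hess}\,f(x/z,y/z)$, a homogeneous polynomial of even degree $2n-4$ with $H_f(x,y,0)=\mathrm{Hess}\,f_n(x,y)$; its zero set in $\mathbb{RP}^2$ is the projective Hessian curve of $f$, and $\mathbb{R}^2$ is identified with $\{z\neq 0\}\subset\mathbb{RP}^2$ via $(x,y)\mapsto[x:y:1]$. The complement in $\mathbb{RP}^2$ of the projective Hessian curve is the disjoint union of two open sets $b^+$ and $b^-$, on each of which $H_f$ has constant sign, the two signs being opposite, where $b^+$ is orientable and $b^-$ is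 nonorientable. *)

theory Defs
  imports "HOL-Analysis.Analysis"
begin

text \<open>Bivariate real polynomials are represented by coefficient functions
  c :: nat => nat => real, where c i j is the coefficient of x^i y^j.
  A polynomial with all coefficients c i j (i + j > N) zero is evaluated by peval N.\<close>

type_synonym bpoly = "nat \<Rightarrow> nat \<Rightarrow> real"

definition peval :: "nat \<Rightarrow> bpoly \<Rightarrow> real \<Rightarrow> real \<Rightarrow> real" where
  "peval N c x y = (\<Sum>i\<le>N. \<Sum>j\<le>N - i. c i j * x ^ i * y ^ j)"

definition has_degree :: "bpoly \<Rightarrow> nat \<Rightarrow> bool" where
  "has_degree c n \<longleftrightarrow> (\<forall>i j. n < i + j \<longrightarrow> c i j = 0) \<and> (\<exists>i j. i + j = n \<and> c i j \<noteq> 0)"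

definition hom_part :: "bpoly \<Rightarrow> nat \<Rightarrow> bpoly" where
  "hom_part c k = (\<lambda>i j. if i + j = k then c i j else 0)"

definition pdx :: "bpoly \<Rightarrow> bpoly" where
  "pdx c = (\<lambda>i j. of_nat (Suc i) * c (Suc i) j)"

definition pdy :: "bpoly \<Rightarrow> bpoly" where
  "pdy c = (\<lambda>i j. of_nat (Suc j) * c i (Suc j))"

definition pmul :: "bpoly \<Rightarrow> bpoly \<Rightarrow> bpoly" where
  "pmul a b = (\<lambda>i j. \<Sum>k\<le>i. \<Sum>l\<le>j. a k l * b (i - k) (j - l))"

definition hess :: "bpoly \<Rightarrow> bpoly" where
  "hess c = (\<lambda>i j. pmul (pdx (pdx c)) (pdy (pdy c)) i j - pmul (pdx (pdy c)) (pdx (pdy c)) i j)"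

definition has_real_linear_factor :: "nat \<Rightarrow> bpoly \<Rightarrow> bool" where
  "has_real_linear_factor N h \<longleftrightarrow>
     (\<exists>a b M q. (a, b) \<noteq> (0, 0) \<and> (\<forall>x y. peval N h x y = (a * x + b * y) * peval M q x y))"

text \<open>Hyperbolic / elliptic homogeneous form g of degree k (Hess g has degree at most 2k).\<close>
definition hyperbolic_form :: "nat \<Rightarrow> bpoly \<Rightarrow> bool" where
  "hyperbolic_form k g \<longleftrightarrow> \<not> has_real_linear_factor (2 * k) (hess g)
      \<and> (\<forall>x y. peval (2 * k) (hess g) x y \<le> 0)"

definition elliptic_form :: "nat \<Rightarrow> bpoly \<Rightarrow> bool" where
  "elliptic_form k g \<longleftrightarrow> \<not> has_real_linear_factor (2 * k) (hess g)
      \<and> (\<forall>x y. peval (2 * k) (hess g) x y \<ge> 0)"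

definition homog :: "nat \<Rightarrow> bpoly \<Rightarrow> real \<times> real \<times> real \<Rightarrow> real" where
  "homog D h v = (case v of (x, y, z) \<Rightarrow>
      (\<Sum>i\<le>D. \<Sum>j\<le>D - i. h i j * x ^ i * y ^ j * z ^ (D - i - j)))"

definition Hproj :: "nat \<Rightarrow> bpoly \<Rightarrow> real \<times> real \<times> real \<Rightarrow> real" where
  "Hproj n c = homog (2 * n - 4) (hess c)"

text \<open>RP^2 is modelled as the unit sphere S^2 modulo the antipodal map; subsets of RP^2
  are represented by antipodally symmetric subsets of S^2.  An open subset U of RP^2 is
  nonorientable iff its orientation double cover, which is its preimage in S^2, has a
  connected component containing a pair of antipodal points.\<close>
definition nonorientable_rp2 :: "(real \<times> real \<times> real) set \<Rightarrow> bool" where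
  "nonorientable_rp2 S \<longleftrightarrow> (\<exists>v\<in>S. connected_component S v (- v))"

definition sign_region :: "nat \<Rightarrow> bpoly \<Rightarrow> real \<Rightarrow> (real \<times> real \<times> real) set" where
  "sign_region n c s = {v \<in> sphere 0 1. Hproj n c v \<noteq> 0 \<and> sgn (Hproj n c v) = s}"

definition bminus :: "nat \<Rightarrow> bpoly \<Rightarrow> (real \<times> real \<times> real) set" where
  "bminus n c = \<Union>{sign_region n c s | s. s \<in> {1, -1} \<and> nonorientable_rp2 (sign_region n c s)}"

text \<open>The affine chart embedding R^2 into RP^2, (x,y) |-> [x:y:1], as a point of S^2.\<close>
definition chart :: "real \<Rightarrow> real \<Rightarrow> real \<times> real \<times> real" where
  "chart x y = (1 / norm (x, y, 1::real)) *\<^sub>R (x, y, 1)"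

end

theory Submission
  imports Defs
begin

lemma pmul_hom:
  assumes A': "\<And>k l. A' k l = (if k + l = m then A k l else 0)"
    and B': "\<And>k l. B' k l = (if k + l = m then B k l else 0)"
    and A0: "\<And>k l. m < k + l \<Longrightarrow> A k l = 0"
    and B0: "\<And>k l. m < k + l \<Longrightarrow> B k l = 0"
  shows "pmul A' B' i j = (if i + j = 2 * m then pmul A B i j else 0)"
proof -
  have t: "A' k l * B' (i - k) (j - l) = (if i + j = 2 * m then A k l * B (i - k) (j - l) else 0)"
    if "k \<le> i" "l \<le> j" for k l
  proof (cases "i + j = 2 * m")
    case True
    show ?thesis
    proof (cases "k + l = m")
      case True
      then show ?thesis using \<open>i + j = 2 * m\<close> that by (simp add: A' B')
    next
      case False
      then consider "k + l > m" | "k + l < m" by linarith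
      then show ?thesis
      proof cases
        case 1 then show ?thesis using True by (simp add: A' A0)
      next
        case 2 then have "m < (i - k) + (j - l)" using True that by linarith
        then show ?thesis using True 2 by (simp add: B' B0)
      qed
    qed
  next
    case False
    then show ?thesis using that by (simp add: A' B') arith
  qed
  show ?thesis unfolding pmul_def
    by (cases "i + j = 2 * m") (simp_all add: t)
qed

lemma hess_hom_part:
  assumes deg: "\<And>i j. n < i + j \<Longrightarrow> c i j = 0" and n: "n \<ge> 2"
  shows "hess (hom_part c n) i j = (if i + j = 2 * n - 4 then hess c i j else 0)"
proof -
  let ?g = "hom_part c n"
  have e: "2 * n - 4 = 2 * (n - 2)" by simp
  have 1: "pmul (pdx (pdx ?g)) (pdy (pdy ?g)) i j
     = (if i + j = 2 * (n - 2) then pmul (pdx (pdx c)) (pdy (pdy c)) i j else 0)"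
    by (rule pmul_hom) (use n in \<open>auto simp: pdx_def pdy_def hom_part_def intro!: deg\<close>)
  have 2: "pmul (pdx (pdy ?g)) (pdx (pdy ?g)) i j
     = (if i + j = 2 * (n - 2) then pmul (pdx (pdy c)) (pdx (pdy c)) i j else 0)"
    by (rule pmul_hom) (use n in \<open>auto simp: pdx_def pdy_def hom_part_def intro!: deg\<close>)
  show ?thesis unfolding hess_def 1 2 e by simp
qed

lemma peval_hom:
  assumes h: "\<And>i j. h i j = (if i + j = D then H i j else 0)" and DN: "D \<le> N"
  shows "peval N h x y = (\<Sum>i\<le>D. H i (D - i) * x ^ i * y ^ (D - i))"
proof -
  have inner: "(\<Sum>j\<le>N - i. h i j * x ^ i * y ^ j) =
      (if i \<le> D then H i (D - i) * x ^ i * y ^ (D - i) else 0)" for i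
  proof -
    have "(\<Sum>j\<le>N - i. h i j * x ^ i * y ^ j) =
       (\<Sum>j\<le>N - i. if j = D - i \<and> i \<le> D then H i (D - i) * x ^ i * y ^ (D - i) else 0)"
      by (rule sum.cong) (auto simp: h)
    also have "\<dots> = (if i \<le> D then H i (D - i) * x ^ i * y ^ (D - i) else 0)"
      using DN by (cases "i \<le> D") (auto simp: sum.delta)
    finally show ?thesis .
  qed
  have "peval N h x y = (\<Sum>i\<le>N. if i \<le> D then H i (D - i) * x ^ i * y ^ (D - i) else 0)"
    unfolding peval_def inner ..
  also have "\<dots> = (\<Sum>i\<in>{..N} \<inter> {i. i \<le> D}. H i (D - i) * x ^ i * y ^ (D - i))"
    by (simp add: sum.inter_restrict)
  also have "{..N} \<inter> {i. i \<le> D} = {..D}" using DN by auto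
  finally show ?thesis .
qed

lemma homog_z0:
  "homog D h (x, y, 0) = (\<Sum>i\<le>D. h i (D - i) * x ^ i * y ^ (D - i))"
proof -
  have "(\<Sum>j\<le>D - i. h i j * x ^ i * y ^ j * 0 ^ (D - i - j)) = h i (D - i) * x ^ i * y ^ (D - i)"
    if "i \<le> D" for i
  proof -
    have "(\<Sum>j\<le>D - i. h i j * x ^ i * y ^ j * 0 ^ (D - i - j)) =
       (\<Sum>j\<le>D - i. if j = D - i then h i (D - i) * x ^ i * y ^ (D - i) else 0)"
      by (rule sum.cong) (auto simp: power_0_left)
    also have "\<dots> = h i (D - i) * x ^ i * y ^ (D - i)" by (simp add: sum.delta)
    finally show ?thesis .
  qed
  then show ?thesis unfolding homog_def by (auto intro: sum.cong)
qed

lemma homog_scale: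
  "homog D h (t * x, t * y, t) = t ^ D * peval D h x y"
proof -
  have "h i j * (t * x) ^ i * (t * y) ^ j * t ^ (D - i - j) = t ^ D * (h i j * x ^ i * y ^ j)"
    if "i \<le> D" "j \<le> D - i" for i j
  proof -
    have "t ^ D = t ^ i * t ^ j * t ^ (D - i - j)"
      using that by (simp flip: power_add)
    then show ?thesis by (simp add: power_mult_distrib)
  qed
  note q = this
  show ?thesis unfolding homog_def peval_def sum_distrib_left prod.case
    by (intro sum.cong refl q) auto
qed

lemma chart_eq: "chart x y = (x / norm (x, y, 1::real), y / norm (x, y, 1::real), 1 / norm (x, y, 1::real))"
  unfolding chart_def by simp

lemma norm_xy1_pos: "norm (x, y, 1::real) > 0"
proof -
  have "(x, y, 1::real) \<noteq> 0" by (simp add: zero_prod_def)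
  then show ?thesis by simp
qed

lemma chart_sphere: "chart x y \<in> sphere 0 1"
proof -
  have "norm ((1 / norm (x, y, 1::real)) *\<^sub>R (x, y, 1::real)) = \<bar>1 / norm (x, y, 1::real)\<bar> * norm (x, y, 1::real)"
    by (rule norm_scaleR)
  also have "\<dots> = 1" using norm_xy1_pos[of x y] by simp
  finally show ?thesis unfolding chart_def by simp
qed

lemma Hproj_chart:
  "Hproj n c (chart x y) = (1 / norm (x, y, 1::real)) ^ (2 * n - 4) * peval (2 * n - 4) (hess c) x y"
  unfolding Hproj_def chart_eq using homog_scale[of "2 * n - 4" "hess c" "1 / norm (x, y, 1::real)" x y]
  by simp

lemma monomials_peval:
  assumes "finite S" "\<forall>s\<in>S. e1 s + e2 s \<le> M"
  shows "\<exists>q. \<forall>x y. peval M q x y = (\<Sum>s\<in>S. w s * x ^ e1 s * y ^ e2 s)"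
  using assms
proof (induction S rule: finite_induct)
  case empty
  show ?case by (rule exI[of _ "\<lambda>i j. 0"]) (simp add: peval_def)
next
  case (insert s S)
  then obtain q where q: "\<forall>x y. peval M q x y = (\<Sum>s\<in>S. w s * x ^ e1 s * y ^ e2 s)" by auto
  have le: "e1 s + e2 s \<le> M" using insert by auto
  define q' where "q' = (\<lambda>i j. q i j + (if i = e1 s \<and> j = e2 s then w s else 0))"
  have d: "(\<Sum>i\<le>M. \<Sum>j\<le>M - i. (if i = e1 s \<and> j = e2 s then w s else 0) * x ^ i * y ^ j)
      = w s * x ^ e1 s * y ^ e2 s" for x y
  proof -
    have "(\<Sum>i\<le>M. \<Sum>j\<le>M - i. (if i = e1 s \<and> j = e2 s then w s else 0) * x ^ i * y ^ j)
       = (\<Sum>i\<le>M. if i = e1 s then w s * x ^ e1 s * y ^ e2 s else 0)"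
    proof (rule sum.cong[OF refl])
      fix i assume "i \<in> {..M}"
      show "(\<Sum>j\<le>M - i. (if i = e1 s \<and> j = e2 s then w s else 0) * x ^ i * y ^ j) =
        (if i = e1 s then w s * x ^ e1 s * y ^ e2 s else 0)"
      proof (cases "i = e1 s")
        case True
        have "(\<Sum>j\<le>M - i. (if i = e1 s \<and> j = e2 s then w s else 0) * x ^ i * y ^ j)
           = (\<Sum>j\<le>M - i. if j = e2 s then w s * x ^ e1 s * y ^ e2 s else 0)"
          by (rule sum.cong) (auto simp: True)
        also have "\<dots> = w s * x ^ e1 s * y ^ e2 s" using le True by (simp add: sum.delta)
        finally show ?thesis using True by simp
      qed simp
    qed
    also have "\<dots> = w s * x ^ e1 s * y ^ e2 s" using le by (simp add: sum.delta)
    finally show ?thesis .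
  qed
  have "peval M q' x y = peval M q x y + w s * x ^ e1 s * y ^ e2 s" for x y
    unfolding peval_def q'_def distrib_right sum.distrib d ..
  then show ?case using q insert by (intro exI[of _ q']) simp
qed

lemma factor_core:
  fixes H :: "nat \<Rightarrow> real"
  assumes b: "b \<noteq> 0" and z: "(\<Sum>i\<le>D. H i * a ^ i * b ^ (D - i)) = 0"
  shows "(\<Sum>i\<le>D. H i * x ^ i * y ^ (D - i)) = (b * x - a * y) *
    (\<Sum>(i, k)\<in>Sigma {..D} (\<lambda>i. {..<i}). (H i * b ^ (D - i) * b ^ k * a ^ (i - 1 - k) / b ^ D) * x ^ k * y ^ (D - 1 - k))"
proof -
  let ?e = "\<Sum>i\<le>D. H i * x ^ i * y ^ (D - i)"
  have 1: "b ^ D * ?e = (\<Sum>i\<le>D. H i * (b * x) ^ i * (b * y) ^ (D - i))"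
    unfolding sum_distrib_left
  proof (rule sum.cong[OF refl])
    fix i assume "i \<in> {..D}"
    then have "b ^ D = b ^ i * b ^ (D - i)" by (simp flip: power_add)
    then show "b ^ D * (H i * x ^ i * y ^ (D - i)) = H i * (b * x) ^ i * (b * y) ^ (D - i)"
      by (simp add: power_mult_distrib)
  qed
  have 2: "(\<Sum>i\<le>D. H i * (a * y) ^ i * (b * y) ^ (D - i)) = 0"
  proof -
    have "(\<Sum>i\<le>D. H i * (a * y) ^ i * (b * y) ^ (D - i)) = y ^ D * (\<Sum>i\<le>D. H i * a ^ i * b ^ (D - i))"
      unfolding sum_distrib_left
    proof (rule sum.cong[OF refl])
      fix i assume "i \<in> {..D}"
      then have "y ^ D = y ^ i * y ^ (D - i)" by (simp flip: power_add)
      then show "H i * (a * y) ^ i * (b * y) ^ (D - i) = y ^ D * (H i * a ^ i * b ^ (D - i))"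
        by (simp add: power_mult_distrib)
    qed
    then show ?thesis using z by simp
  qed
  have 3: "b ^ D * ?e = (\<Sum>i\<le>D. H i * (b * y) ^ (D - i) * ((b * x) ^ i - (a * y) ^ i))"
    using 1 2 by (simp add: algebra_simps sum_subtractf)
  also have "\<dots> = (b * x - a * y) * (\<Sum>i\<le>D. H i * (b * y) ^ (D - i) * (\<Sum>k<i. (a * y) ^ (i - Suc k) * (b * x) ^ k))"
    unfolding power_diff_sumr2 sum_distrib_left by (simp add: ac_simps)
  also have "(\<Sum>i\<le>D. H i * (b * y) ^ (D - i) * (\<Sum>k<i. (a * y) ^ (i - Suc k) * (b * x) ^ k))
    = (\<Sum>(i, k)\<in>Sigma {..D} (\<lambda>i. {..<i}). H i * (b * y) ^ (D - i) * ((a * y) ^ (i - Suc k) * (b * x) ^ k))"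
    by (subst sum.Sigma[symmetric]) (auto simp: sum_distrib_left)
  also have "\<dots> = b ^ D * (\<Sum>(i, k)\<in>Sigma {..D} (\<lambda>i. {..<i}). (H i * b ^ (D - i) * b ^ k * a ^ (i - 1 - k) / b ^ D) * x ^ k * y ^ (D - 1 - k))"
    unfolding sum_distrib_left
  proof (rule sum.cong[OF refl])
    fix p assume "p \<in> Sigma {..D} (\<lambda>i. {..<i})"
    then obtain i k where p: "p = (i, k)" "i \<le> D" "k < i" by auto
    have "D - 1 - k = (D - i) + (i - Suc k)" using p by arith
    then have "y ^ (D - 1 - k) = y ^ (D - i) * y ^ (i - Suc k)" by (simp add: power_add)
    then show "(case p of (i, k) \<Rightarrow> H i * (b * y) ^ (D - i) * ((a * y) ^ (i - Suc k) * (b * x) ^ k)) =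
         b ^ D * (case p of (i, k) \<Rightarrow> (H i * b ^ (D - i) * b ^ k * a ^ (i - 1 - k) / b ^ D * x ^ k * y ^ (D - 1 - k)))"
      using b p by (simp add: power_mult_distrib)
  qed
  finally show ?thesis using b by simp
qed

lemma sum_rev_form:
  fixes H :: "nat \<Rightarrow> real"
  shows "(\<Sum>i\<le>D. H i * x ^ i * y ^ (D - i)) = (\<Sum>i\<le>D. H (D - i) * y ^ i * x ^ (D - i))"
proof -
  have "(\<Sum>i\<le>D. H i * x ^ i * y ^ (D - i)) = (\<Sum>i=0..D. H i * x ^ i * y ^ (D - i))"
    by (simp add: atLeast0AtMost)
  also have "\<dots> = (\<Sum>i=0..D. H (D + 0 - i) * x ^ (D + 0 - i) * y ^ (D - (D + 0 - i)))"
    by (rule sum.atLeastAtMost_rev)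
  also have "\<dots> = (\<Sum>i\<le>D. H (D - i) * y ^ i * x ^ (D - i))"
    by (simp add: atLeast0AtMost) (rule sum.cong, auto)
  finally show ?thesis .
qed

lemma sum_case_conv:
  "(\<Sum>(i, k)\<in>S. f i k * x ^ k * y ^ (D - 1 - k)) = (\<Sum>p\<in>S. (case p of (i, k) \<Rightarrow> f i k) * x ^ (snd p) * y ^ (D - 1 - snd p))"
  by (rule sum.cong) auto

lemma root_factor:
  fixes H :: "nat \<Rightarrow> real"
  assumes ab: "(a, b) \<noteq> (0, 0)" and z: "(\<Sum>i\<le>D. H i * a ^ i * b ^ (D - i)) = 0"
  shows "\<exists>\<alpha> \<beta> M q. (\<alpha>, \<beta>) \<noteq> (0, 0) \<and>
     (\<forall>x y. (\<Sum>i\<le>D. H i * x ^ i * y ^ (D - i)) = (\<alpha> * x + \<beta> * y) * peval M q x y)"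
proof (cases "b = 0")
  case False
  let ?S = "Sigma {..D} (\<lambda>i. {..<i})"
  let ?w = "\<lambda>p. case p of (i, k) \<Rightarrow> H i * b ^ (D - i) * b ^ k * a ^ (i - 1 - k) / b ^ D"
  have "\<exists>q. \<forall>x y. peval (D - 1) q x y = (\<Sum>p\<in>?S. ?w p * x ^ (snd p) * y ^ (D - 1 - snd p))"
    by (rule monomials_peval) auto
  then obtain q where q: "\<And>x y. peval (D - 1) q x y = (\<Sum>p\<in>?S. ?w p * x ^ (snd p) * y ^ (D - 1 - snd p))"
    by blast
  show ?thesis
  proof (intro exI conjI allI)
    show "(b, - a) \<noteq> (0, 0)" using False by simp
    fix x y
    show "(\<Sum>i\<le>D. H i * x ^ i * y ^ (D - i)) = (b * x + - a * y) * peval (D - 1) q x y"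
      unfolding q factor_core[OF False z, of x y] sum_case_conv by simp
  qed
next
  case True
  then have a: "a \<noteq> 0" using ab by simp
  let ?H = "\<lambda>i. H (D - i)"
  have z': "(\<Sum>i\<le>D. ?H i * b ^ i * a ^ (D - i)) = 0"
    using z sum_rev_form[of H a b D] by simp
  let ?S = "Sigma {..D} (\<lambda>i. {..<i})"
  let ?w = "\<lambda>p. case p of (i, k) \<Rightarrow> ?H i * a ^ (D - i) * a ^ k * b ^ (i - 1 - k) / a ^ D"
  have "\<exists>q. \<forall>x y. peval (D - 1) q x y = (\<Sum>p\<in>?S. ?w p * x ^ (D - 1 - snd p) * y ^ (snd p))"
    by (rule monomials_peval) auto
  then obtain q where q: "\<And>x y. peval (D - 1) q x y = (\<Sum>p\<in>?S. ?w p * x ^ (D - 1 - snd p) * y ^ (snd p))"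
    by blast
  show ?thesis
  proof (intro exI conjI allI)
    show "(- b, a) \<noteq> (0, 0)" using a by simp
    fix x y
    have "(\<Sum>i\<le>D. H i * x ^ i * y ^ (D - i)) = (\<Sum>i\<le>D. ?H i * y ^ i * x ^ (D - i))"
      by (rule sum_rev_form)
    also have "\<dots> = (a * y - b * x) * (\<Sum>p\<in>?S. ?w p * y ^ (snd p) * x ^ (D - 1 - snd p))"
      unfolding factor_core[OF a z', of y x] sum_case_conv ..
    also have "\<dots> = (- b * x + a * y) * peval (D - 1) q x y"
      unfolding q by (simp add: ac_simps)
    finally show "(\<Sum>i\<le>D. H i * x ^ i * y ^ (D - i)) = (- b * x + a * y) * peval (D - 1) q x y" .
  qed
qed

lemma homog_alt:
  "homog D h = (\<lambda>v. \<Sum>i\<le>D. \<Sum>j\<le>D - i. h i j * fst v ^ i * fst (snd v) ^ j * snd (snd v) ^ (D - i - j))"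
  by (auto simp: homog_def split: prod.split)

lemma cont_Hproj: "continuous_on A (Hproj n c)"
  unfolding Hproj_def homog_alt by (intro continuous_intros)

lemma cont_peval: "continuous_on A (\<lambda>p. peval N h (fst p) (snd p))"
  unfolding peval_def by (intro continuous_intros)

lemma sphere_z0: "(x, y, 0) \<in> sphere (0::real \<times> real \<times> real) 1 \<Longrightarrow> (x, y) \<noteq> (0, 0)"
  by (auto simp: norm_Pair)

lemma region_orientable:
  assumes sg: "\<And>x y. (x, y) \<noteq> (0, 0) \<Longrightarrow> sgn (Hproj n c (x, y, 0)) = \<sigma>" and s0: "\<sigma> \<noteq> 0"
  shows "\<not> nonorientable_rp2 (sign_region n c (- \<sigma>))"
proof
  let ?S = "sign_region n c (- \<sigma>)"
  have bad: "w \<notin> ?S" if z0: "snd (snd w) = 0" for w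
  proof
    assume w: "w \<in> ?S"
    obtain x y where wxy: "w = (x, y, 0)" using z0 by (metis prod.collapse)
    have "(x, y) \<noteq> (0, 0)" using w wxy sphere_z0 by (auto simp: sign_region_def)
    then have "sgn (Hproj n c w) = \<sigma>" using sg wxy by simp
    with w s0 show False by (auto simp: sign_region_def)
  qed
  assume "nonorientable_rp2 ?S"
  then obtain v where v: "v \<in> ?S" and cc: "connected_component ?S v (- v)"
    unfolding nonorientable_rp2_def by blast
  then obtain T where T: "connected T" "T \<subseteq> ?S" "v \<in> T" "- v \<in> T"
    unfolding connected_component_def by blast
  let ?f = "\<lambda>w::real \<times> real \<times> real. snd (snd w)"
  have con: "connected (?f ` T)"
    by (rule connected_continuous_image[OF _ T(1)]) (intro continuous_intros)
  have z: "?f v \<noteq> 0" using bad v by blast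
  have fv: "?f v \<in> ?f ` T" by (rule imageI) (rule T(3))
  have fmv0: "?f (- v) \<in> ?f ` T" by (rule imageI) (rule T(4))
  have fmv: "- ?f v \<in> ?f ` T" using fmv0 by simp
  have "0 \<in> ?f ` T"
  proof (cases "?f v > 0")
    case True
    then show ?thesis using connected_contains_Icc[OF con fmv fv] by auto
  next
    case False
    then show ?thesis using z connected_contains_Icc[OF con fv fmv] by auto
  qed
  then obtain w where "w \<in> T" "?f w = 0" by auto
  then show False using bad T by blast
qed

lemma sgn_peval_chart:
  "sgn (Hproj n c (chart x y)) = sgn (peval (2 * n - 4) (hess c) x y)"
  unfolding Hproj_chart using norm_xy1_pos[of x y] by (simp add: sgn_mult)

lemma bminus_sign:
  assumes sg: "\<And>x y. (x, y) \<noteq> (0, 0) \<Longrightarrow> sgn (Hproj n c (x, y, 0)) = \<sigma>" and s: "\<sigma> = 1 \<or> \<sigma> = -1"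
    and m: "chart x y \<in> bminus n c"
  shows "sgn (peval (2 * n - 4) (hess c) x y) = \<sigma>"
proof -
  from m obtain t where t: "t = 1 \<or> t = -1" "nonorientable_rp2 (sign_region n c t)"
     "chart x y \<in> sign_region n c t"
    unfolding bminus_def by auto
  have "t \<noteq> - \<sigma>" using region_orientable[OF sg] s t(2) by force
  then have "t = \<sigma>" using s t(1) by auto
  then show ?thesis using t(3) sgn_peval_chart[of n c x y] by (simp add: sign_region_def)
qed



lemma compact_zero:
  assumes sg: "\<And>x y. (x, y) \<noteq> (0, 0) \<Longrightarrow> sgn (Hproj n c (x, y, 0)) = \<sigma>" and s0: "\<sigma> \<noteq> 0"
  shows "compact {p :: real \<times> real. peval (2 * n - 4) (hess c) (fst p) (snd p) = 0}"
proof -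
  let ?Z = "{p :: real \<times> real. peval (2 * n - 4) (hess c) (fst p) (snd p) = 0}"
  let ?K = "{v \<in> sphere (0::real \<times> real \<times> real) 1. Hproj n c v = 0}"
  have closedZ: "closed ?Z"
    by (rule closed_Collect_eq) (intro cont_peval continuous_intros)+
  have "closed {v. Hproj n c v = 0}"
    by (rule closed_Collect_eq) (intro cont_Hproj continuous_intros)+
  then have compK: "compact ?K"
  proof -
    have "?K = sphere 0 1 \<inter> {v. Hproj n c v = 0}" by auto
    then show ?thesis using compact_Int_closed[OF compact_sphere] \<open>closed {v. Hproj n c v = 0}\<close> by simp
  qed
  have inK: "chart (fst p) (snd p) \<in> ?K" if "p \<in> ?Z" for p
    using that chart_sphere Hproj_chart by simp
  have zK: "snd (snd v) \<noteq> 0" if "v \<in> ?K" for v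
  proof
    assume z0: "snd (snd v) = 0"
    obtain a b z where vv: "v = (a, b, z)" by (cases v) blast
    have z: "z = 0" using z0 vv by simp
    have "(a, b, 0) \<in> sphere (0::real \<times> real \<times> real) 1" using that vv z by simp
    then have "(a, b) \<noteq> (0, 0)" by (rule sphere_z0)
    then have "sgn (Hproj n c (a, b, 0)) = \<sigma>" by (rule sg)
    then show False using that s0 vv z by simp
  qed
  have "bounded ?Z"
  proof (cases "?K = {}")
    case True
    then have "?Z = {}" using inK by blast
    then show ?thesis by simp
  next
    case False
    obtain w where w: "w \<in> ?K" "\<And>v. v \<in> ?K \<Longrightarrow> \<bar>snd (snd w)\<bar> \<le> \<bar>snd (snd v)\<bar>"
    proof -
      have "continuous_on ?K (\<lambda>v. \<bar>snd (snd v)\<bar>)" by (intro continuous_intros)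
      from continuous_attains_inf[OF compK False this] show ?thesis using that by blast
    qed
    define \<delta> where "\<delta> = \<bar>snd (snd w)\<bar>"
    have dpos: "\<delta> > 0" using zK[OF w(1)] by (simp add: \<delta>_def)
    have "?Z \<subseteq> cball 0 (1 / \<delta>)"
    proof
      fix p assume p: "p \<in> ?Z"
      obtain x y where pxy: "p = (x, y)" by (cases p)
      have "\<delta> \<le> \<bar>snd (snd (chart x y))\<bar>" using w(2)[OF inK[OF p]] pxy by (simp add: \<delta>_def)
      also have "\<dots> = 1 / norm (x, y, 1::real)" by (simp add: chart_eq)
      finally have "\<delta> \<le> 1 / norm (x, y, 1::real)" .
      then have "norm (x, y, 1::real) \<le> 1 / \<delta>" using dpos norm_xy1_pos[of x y]
        by (simp add: field_simps)
      moreover have "norm (x, y) \<le> norm (x, y, 1::real)" by (simp add: norm_Pair)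
      ultimately show "p \<in> cball 0 (1 / \<delta>)" using pxy by simp
    qed
    then show ?thesis using bounded_cball bounded_subset by blast
  qed
  then show ?thesis using closedZ by (simp add: compact_eq_bounded_closed)
qed

theorem theorem2:
  fixes c :: bpoly and n :: nat
  assumes "has_degree c n" and "n \<ge> 3"
    and "hyperbolic_form n (hom_part c n) \<or> elliptic_form n (hom_part c n)"
  shows "compact {p :: real \<times> real. peval (2 * n - 4) (hess c) (fst p) (snd p) = 0}
    \<and> (hyperbolic_form n (hom_part c n) \<longrightarrow>
         (\<forall>x y. chart x y \<in> bminus n c \<longrightarrow> peval (2 * n - 4) (hess c) x y < 0))
    \<and> (elliptic_form n (hom_part c n) \<longrightarrow>
         (\<forall>x y. chart x y \<in> bminus n c \<longrightarrow> peval (2 * n - 4) (hess c) x y > 0))"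
proof -
  define D where "D = 2 * n - 4"
  define e where "e = (\<lambda>x y. \<Sum>i\<le>D. hess c i (D - i) * x ^ i * y ^ (D - i))"
  let ?g = "hom_part c n"
  have deg: "\<And>i j. n < i + j \<Longrightarrow> c i j = 0" using assms(1) by (simp add: has_degree_def)
  have n2: "n \<ge> 2" using assms(2) by linarith
  have hh: "hess ?g i j = (if i + j = D then hess c i j else 0)" for i j
    unfolding D_def by (rule hess_hom_part[OF deg n2])
  have E1: "peval (2 * n) (hess ?g) x y = e x y" for x y
    unfolding e_def by (rule peval_hom[OF hh]) (simp add: D_def)
  have E2: "Hproj n c (x, y, 0) = e x y" for x y
    unfolding e_def Hproj_def D_def homog_z0 ..
  have nz: "e x y \<noteq> 0" if xy: "(x, y) \<noteq> (0, 0)" and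
     nf: "\<not> has_real_linear_factor (2 * n) (hess ?g)" for x y
  proof
    assume "e x y = 0"
    from root_factor[OF xy this[unfolded e_def]] obtain \<alpha> \<beta> M q where
      "(\<alpha>, \<beta>) \<noteq> (0, 0)" "\<forall>u v. e u v = (\<alpha> * u + \<beta> * v) * peval M q u v"
      unfolding e_def by blast
    then have "has_real_linear_factor (2 * n) (hess ?g)"
      unfolding has_real_linear_factor_def E1 by blast
    with nf show False by simp
  qed
  have hyp: "sgn (Hproj n c (x, y, 0)) = -1" if "hyperbolic_form n ?g" "(x, y) \<noteq> (0, 0)" for x y
  proof -
    have "e x y \<le> 0" using that(1) E1 by (simp add: hyperbolic_form_def)
    moreover have "e x y \<noteq> 0" using nz[OF that(2)] that(1) by (simp add: hyperbolic_form_def)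
    ultimately show ?thesis by (simp add: E2)
  qed
  have ell: "sgn (Hproj n c (x, y, 0)) = 1" if "elliptic_form n ?g" "(x, y) \<noteq> (0, 0)" for x y
  proof -
    have "e x y \<ge> 0" using that(1) E1 by (simp add: elliptic_form_def)
    moreover have "e x y \<noteq> 0" using nz[OF that(2)] that(1) by (simp add: elliptic_form_def)
    ultimately show ?thesis by (simp add: E2)
  qed
  have C: "compact {p :: real \<times> real. peval (2 * n - 4) (hess c) (fst p) (snd p) = 0}"
    using assms(3)
  proof
    assume h: "hyperbolic_form n ?g"
    show ?thesis by (rule compact_zero[of n c "-1"]) (use hyp[OF h] in auto)
  next
    assume h: "elliptic_form n ?g"
    show ?thesis by (rule compact_zero[of n c "1"]) (use ell[OF h] in auto)
  qed
  have H: "peval (2 * n - 4) (hess c) x y < 0" if h: "hyperbolic_form n ?g" "chart x y \<in> bminus n c" for x y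
  proof -
    have "sgn (peval (2 * n - 4) (hess c) x y) = -1"
      by (rule bminus_sign[of n c "-1"]) (use hyp[OF h(1)] h(2) in auto)
    then show ?thesis by (simp add: sgn_if split: if_splits)
  qed
  have L: "peval (2 * n - 4) (hess c) x y > 0" if h: "elliptic_form n ?g" "chart x y \<in> bminus n c" for x y
  proof -
    have "sgn (peval (2 * n - 4) (hess c) x y) = 1"
      by (rule bminus_sign[of n c "1"]) (use ell[OF h(1)] h(2) in auto)
    then show ?thesis by (simp add: sgn_if split: if_splits)
  qed
  show ?thesis using C H L by blast
qed

end
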